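(* Let $k>1$ and $1\le\gamma<k$. Consider instances $\mathcal{I}_{m,\mathcal{A}_n,k}$ whose users are partitioned into $\gamma$ groups $G_1,\dots,G_\gamma$ each of which is cohesive. For any scoring rule $f$, the price of justified representation over such instances satisfies $P(k,f)\le\frac{k}{k-\gamma}$, and this holds with equality for certain scoring rules, such as maximin diverse approval $f_{DA}$.
   Context: An instance $\mathcal{I}_{m,\mathcal{A}_n,k}=\langle m,\mathcal{A}_n,k\rangle$ consists of items $[m]$, users $[n]$, an approval profile $\mathcal{A}_n=(A_1,\dots,A_n)$ with $A_u\subseteq[m]$, and a target size $k\le m$. A scoring rule assigns each item a score $f(i,\mathcal{A}_n)\ge0$, additive over sets: $f(S)=\sum_{i\in S}f(i,\mathcal{A}_n)$. A group $G\subseteq[n]$ is cohesive if $\bigcap_{u\in G}A_u\ne\emptyset$; $S$ represents $G$ if some $u\in G$ has $A_u\cap S\ne\emptyset$; $S$ satisfies justified representation (JR) if $|S|=k$ and $S$ represents every cohesive group of at least $n/k$ users. $S^*$ maximizes $f(S)$ over all $S\subseteq[m]$ with $|S|=k$; $S^*_{JR}$ maximizes $f(S)$ over sets satisfying JR. The price of JR on an instance is $P(\mathcal{I}_{m,\mathcal{A}_n,k},f)=f(S^* )/f(S^*_{JR})$, and $P(k,f)$ is its maximum over the instances considered. Maximin diverse approval with respect to groups $G_1,\dots,G_\gamma$ is $f_{DA}(i,\mathcal{A}_n)=\min_{g\in[\gamma]}\frac{1}{|G_g|}|\{u\in G_g:i\in A_u\}|$. *)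

theory Defs
  imports Complex_Main
begin

text \<open>Conventions (0-based): items are {..<m}, users are {..<n}, groups are
  indexed by {..<gamma}. A profile is A :: nat => nat set (A u = approval set of user u),
  a grouping is G :: nat => nat set (G g = set of users of group g).
  A scoring rule is a function of the whole instance (m, n, A, G) and an item.\<close>

definition cohesive :: "(nat \<Rightarrow> nat set) \<Rightarrow> nat set \<Rightarrow> bool" where
  "cohesive A Gr \<longleftrightarrow> (\<Inter>u\<in>Gr. A u) \<noteq> {}"

definition represents :: "(nat \<Rightarrow> nat set) \<Rightarrow> nat set \<Rightarrow> nat set \<Rightarrow> bool" where
  "represents A S Gr \<longleftrightarrow> (\<exists>u\<in>Gr. A u \<inter> S \<noteq> {})"

definition satisfies_JR :: "nat \<Rightarrow> nat \<Rightarrow> (nat \<Rightarrow> nat set) \<Rightarrow> nat \<Rightarrow> nat set \<Rightarrow> bool" where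
  "satisfies_JR m n A k S \<longleftrightarrow> S \<subseteq> {..<m} \<and> card S = k \<and>
     (\<forall>Gr. Gr \<subseteq> {..<n} \<and> cohesive A Gr \<and> real (card Gr) \<ge> real n / real k
        \<longrightarrow> represents A S Gr)"

definition set_score :: "(nat \<Rightarrow> real) \<Rightarrow> nat set \<Rightarrow> real" where
  "set_score sc S = (\<Sum>i\<in>S. sc i)"

definition opt_value :: "(nat \<Rightarrow> real) \<Rightarrow> nat \<Rightarrow> nat \<Rightarrow> real" where
  "opt_value sc m k = Max {set_score sc S | S. S \<subseteq> {..<m} \<and> card S = k}"

definition opt_JR_value :: "(nat \<Rightarrow> real) \<Rightarrow> nat \<Rightarrow> nat \<Rightarrow> (nat \<Rightarrow> nat set) \<Rightarrow> nat \<Rightarrow> real" where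
  "opt_JR_value sc m n A k = Max {set_score sc S | S. satisfies_JR m n A k S}"

definition price_inst :: "(nat \<Rightarrow> real) \<Rightarrow> nat \<Rightarrow> nat \<Rightarrow> (nat \<Rightarrow> nat set) \<Rightarrow> nat \<Rightarrow> real" where
  "price_inst sc m n A k = opt_value sc m k / opt_JR_value sc m n A k"

definition grouped_instance ::
  "nat \<Rightarrow> nat \<Rightarrow> nat \<Rightarrow> nat \<Rightarrow> (nat \<Rightarrow> nat set) \<Rightarrow> (nat \<Rightarrow> nat set) \<Rightarrow> bool" where
  "grouped_instance gamma k m n A G \<longleftrightarrow>
     k \<le> m \<and> (\<forall>u<n. A u \<subseteq> {..<m}) \<and>
     (\<forall>g<gamma. G g \<noteq> {} \<and> cohesive A (G g)) \<and>
     (\<forall>g<gamma. \<forall>h<gamma. g \<noteq> h \<longrightarrow> G g \<inter> G h = {}) \<and>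
     (\<Union>g<gamma. G g) = {..<n}"

type_synonym scoring_rule = "nat \<Rightarrow> nat \<Rightarrow> (nat \<Rightarrow> nat set) \<Rightarrow> (nat \<Rightarrow> nat set) \<Rightarrow> nat \<Rightarrow> real"

definition scoring_rule :: "scoring_rule \<Rightarrow> bool" where
  "scoring_rule f \<longleftrightarrow> (\<forall>m n A G i. f m n A G i \<ge> 0)"

definition price_k :: "nat \<Rightarrow> nat \<Rightarrow> scoring_rule \<Rightarrow> real" where
  "price_k gamma k f = Sup {price_inst (f m n A G) m n A k | m n A G.
                              grouped_instance gamma k m n A G}"

definition f_DA :: "nat \<Rightarrow> scoring_rule" where
  "f_DA gamma m n A G i =
     Min ((\<lambda>g. real (card {u\<in>G g. i \<in> A u}) / real (card (G g))) ` {..<gamma})"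

end

theory Submission
  imports Defs
begin

lemma remove_lemma:
  fixes sc :: "nat \<Rightarrow> real"
  assumes fin: "finite X" and nn: "\<forall>i. sc i \<ge> 0" and r: "r \<le> card X"
  shows "\<exists>Y\<subseteq>X. card Y = card X - r \<and> real (card X - r) * sum sc X \<le> real (card X) * sum sc Y"
  using r
proof (induction r)
  case 0
  then show ?case by auto
next
  case (Suc r)
  then obtain Y where Y: "Y \<subseteq> X" "card Y = card X - r"
      "real (card X - r) * sum sc X \<le> real (card X) * sum sc Y" by auto
  have fY: "finite Y" using Y(1) fin finite_subset by blast
  have Yne: "Y \<noteq> {}" using Y(2) Suc.prems by auto
  define a where "a = Min (sc ` Y)"
  have "a \<in> sc ` Y" unfolding a_def using fY Yne by (intro Min_in) auto
  then obtain y where y: "y \<in> Y" "sc y = a" by auto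
  have amin: "\<And>z. z\<in>Y \<Longrightarrow> a \<le> sc z" using fY a_def by auto
  have sY: "real (card Y) * a \<le> sum sc Y" using sum_bounded_below[of Y a sc] amin by auto
  define q where "q = card X - r"
  define p where "p = card X"
  define S where "S = sum sc X"
  define s where "s = sum sc Y"
  have q1: "q \<ge> 1" using Suc.prems q_def by auto
  have card': "card (Y - {y}) = card X - Suc r" using Y(2) y(1) fY by auto
  have sum': "sum sc (Y - {y}) = sum sc Y - a" using y fY by (simp add: sum_diff1)
  have h1: "real q * a \<le> s" using sY Y(2) q_def s_def by simp
  have h2: "real q * S \<le> real p * s" using Y(3) q_def p_def S_def s_def by simp
  have pge: "real p \<ge> 0" by simp
  have qm: "real (q - 1) = real q - 1" using q1 by (simp add: of_nat_diff)
  have "real q * ((real q - 1) * S) = (real q - 1) * (real q * S)" by (simp add: algebra_simps)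
  also have "\<dots> \<le> (real q - 1) * (real p * s)" using h2 q1 by (intro mult_left_mono) auto
  also have "\<dots> = real p * (real q * s - s)" by (simp add: algebra_simps)
  also have "\<dots> \<le> real p * (real q * s - real q * a)" using h1 pge by (intro mult_left_mono) auto
  also have "\<dots> = real q * (real p * (s - a))" by (simp add: algebra_simps)
  finally have "(real q - 1) * S \<le> real p * (s - a)" using q1 by simp
  moreover have "real (card X - Suc r) = real q - 1" using q_def Suc.prems by (simp add: of_nat_diff)
  ultimately show ?case using card' sum' Y(1) p_def S_def s_def
    by (intro exI[of _ "Y - {y}"]) auto
qed

lemma extend_set:
  assumes "finite X" "B \<subseteq> X" "card B \<le> j" "j \<le> card X"
  shows "\<exists>T. B \<subseteq> T \<and> T \<subseteq> X \<and> card T = j"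
proof -
  have fB: "finite B" using assms finite_subset by blast
  have "card (X - B) = card X - card B" using assms fB by (simp add: card_Diff_subset)
  then have "j - card B \<le> card (X - B)" using assms by simp
  then obtain D where D: "D \<subseteq> X - B" "card D = j - card B" "finite D"
    using obtain_subset_with_card_n by metis
  have "card (B \<union> D) = card B + card D" using D fB by (intro card_Un_disjoint) auto
  then show ?thesis using D assms by (intro exI[of _ "B \<union> D"]) auto
qed

lemma main_upper:
  fixes sc :: "nat \<Rightarrow> real"
  assumes k1: "k > 1" and g1: "1 \<le> \<gamma>" and gk: "\<gamma> < k" and nn: "\<forall>i. sc i \<ge> 0"
    and gi: "grouped_instance \<gamma> k m n A G"
  shows "price_inst sc m n A k \<le> real k / (real k - real \<gamma>)"
proof -
  from gi have km: "k \<le> m" and Asub: "\<forall>u<n. A u \<subseteq> {..<m}"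
    and coh: "\<forall>g<\<gamma>. G g \<noteq> {} \<and> cohesive A (G g)" and un: "(\<Union>g<\<gamma>. G g) = {..<n}"
    unfolding grouped_instance_def by auto
  define OS where "OS = {set_score sc S | S. S \<subseteq> {..<m} \<and> card S = k}"
  define JS where "JS = {set_score sc S | S. satisfies_JR m n A k S}"
  have finOS: "finite OS"
  proof -
    have "OS \<subseteq> set_score sc ` Pow {..<m}" unfolding OS_def by auto
    thus ?thesis by (rule finite_subset) auto
  qed
  have finJS: "finite JS"
  proof -
    have "JS \<subseteq> set_score sc ` Pow {..<m}" unfolding JS_def satisfies_JR_def by auto
    thus ?thesis by (rule finite_subset) auto
  qed
  obtain S0 where "S0 \<subseteq> {..<m}" "card S0 = k" using obtain_subset_with_card_n[of k "{..<m}"] km by auto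
  then have OSne: "OS \<noteq> {}" unfolding OS_def by auto
  have "opt_value sc m k = Max OS" by (simp add: opt_value_def OS_def)
  moreover have "Max OS \<in> OS" using finOS OSne by (rule Max_in)
  ultimately obtain Sst where Sst: "Sst \<subseteq> {..<m}" "card Sst = k" "opt_value sc m k = set_score sc Sst"
    unfolding OS_def by auto
  have finSst: "finite Sst" using Sst(1) finite_subset by blast
  have "\<forall>g<\<gamma>. \<exists>c. \<forall>u\<in>G g. c \<in> A u" using coh unfolding cohesive_def by blast
  then obtain c where c: "\<forall>g<\<gamma>. \<forall>u\<in>G g. c g \<in> A u" by metis
  define C where "C = c ` {..<\<gamma>}"
  have Csub: "C \<subseteq> {..<m}"
  proof
    fix x assume "x \<in> C"
    then obtain g where g: "g < \<gamma>" "x = c g" unfolding C_def by auto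
    then obtain u where "u \<in> G g" using coh by blast
    then have "u < n" "c g \<in> A u" using un g c by auto
    then show "x \<in> {..<m}" using Asub g by auto
  qed
  have cardC: "card C \<le> \<gamma>" unfolding C_def using card_image_le[of "{..<\<gamma>}" c] by simp
  obtain Y where Y: "Y \<subseteq> Sst" "card Y = k - \<gamma>"
      "real (k - \<gamma>) * set_score sc Sst \<le> real k * set_score sc Y"
    using remove_lemma[OF finSst nn, of \<gamma>] Sst gk unfolding set_score_def by auto
  have "card (C \<union> Y) \<le> card C + card Y" by (rule card_Un_le)
  then have cCY: "card (C \<union> Y) \<le> k" using cardC Y(2) gk by linarith
  obtain T where T: "C \<union> Y \<subseteq> T" "T \<subseteq> {..<m}" "card T = k"
    using extend_set[of "{..<m}" "C \<union> Y" k] Csub Y(1) Sst(1) cCY km by auto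
  have n0: "n > 0"
  proof -
    obtain u where "u \<in> G 0" using coh g1 by fastforce
    then have "u \<in> {..<n}" using un g1 by auto
    then show ?thesis by auto
  qed
  have JR: "satisfies_JR m n A k T"
    unfolding satisfies_JR_def represents_def
  proof (intro conjI allI impI)
    fix Gr assume H: "Gr \<subseteq> {..<n} \<and> cohesive A Gr \<and> real n / real k \<le> real (card Gr)"
    have "real n / real k > 0" using n0 k1 by simp
    then have "card Gr > 0" using H by linarith
    then obtain u where u: "u \<in> Gr" by (metis card.empty equals0I less_irrefl)
    then have "u \<in> {..<n}" using H by auto
    then obtain g where g: "g < \<gamma>" "u \<in> G g" using un by auto
    then have "c g \<in> A u" "c g \<in> T" using c T(1) unfolding C_def by auto
    then show "\<exists>u\<in>Gr. A u \<inter> T \<noteq> {}" using u by auto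
  qed (use T in auto)
  have "set_score sc T \<in> JS" unfolding JS_def using JR by auto
  then have JT: "set_score sc T \<le> opt_JR_value sc m n A k"
    unfolding opt_JR_value_def JS_def[symmetric] using finJS by auto
  have finT: "finite T" using T(2) finite_subset by blast
  have YT: "set_score sc Y \<le> set_score sc T"
    unfolding set_score_def using T(1) finT nn by (intro sum_mono2) auto
  have Y0: "set_score sc Y \<ge> 0" unfolding set_score_def using nn by (simp add: sum_nonneg)
  define Ov where "Ov = opt_value sc m k"
  define J where "J = opt_JR_value sc m n A k"
  have kg: "real (k - \<gamma>) = real k - real \<gamma>" using gk by (simp add: of_nat_diff)
  have pos: "real k - real \<gamma> > 0" using gk by simp
  have key: "(real k - real \<gamma>) * Ov \<le> real k * J"
  proof -
    have "(real k - real \<gamma>) * Ov \<le> real k * set_score sc Y" using Y(3) kg Sst(3) Ov_def by simp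
    also have "\<dots> \<le> real k * J" using YT JT J_def by (intro mult_left_mono) auto
    finally show ?thesis .
  qed
  have J0: "J \<ge> 0" using JT YT Y0 J_def by linarith
  show ?thesis
  proof (cases "J = 0")
    case True
    then show ?thesis using pos unfolding price_inst_def J_def[symmetric] by simp
  next
    case False
    then have "J > 0" using J0 by simp
    then show ?thesis unfolding price_inst_def J_def[symmetric] Ov_def[symmetric]
      using key pos by (simp add: divide_simps mult.commute)
  qed
qed

lemma price_lower:
  fixes sc :: "nat \<Rightarrow> real"
  assumes gk: "\<gamma> < k" and hc: "\<forall>i<k. sc i = c" and hz: "\<forall>i. k \<le> i \<and> i < k+\<gamma> \<longrightarrow> sc i = 0"
    and c0: "c > 0"
    and JRZ: "\<forall>T. satisfies_JR (k+\<gamma>) n A k T \<longrightarrow> {k..<k+\<gamma>} \<subseteq> T"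
    and T0: "satisfies_JR (k+\<gamma>) n A k ({..<k-\<gamma>} \<union> {k..<k+\<gamma>})"
  shows "real k / (real k - real \<gamma>) \<le> price_inst sc (k+\<gamma>) n A k"
proof -
  have scoreJR: "set_score sc T = c * real (k-\<gamma>)" if JR: "satisfies_JR (k+\<gamma>) n A k T" for T
  proof -
    have Ts: "T \<subseteq> {..<k+\<gamma>}" "card T = k" using JR unfolding satisfies_JR_def by auto
    have Z: "{k..<k+\<gamma>} \<subseteq> T" using JRZ JR by auto
    have Teq: "T = (T \<inter> {..<k}) \<union> {k..<k+\<gamma>}" using Ts Z by auto
    have cardeq: "card T = card (T \<inter> {..<k}) + card {k..<k+\<gamma>}"
      by (subst Teq, rule card_Un_disjoint) auto
    then have cT: "card (T \<inter> {..<k}) = k - \<gamma>" using Ts by simp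
    have "set_score sc T = sum sc (T \<inter> {..<k}) + sum sc {k..<k+\<gamma>}"
      unfolding set_score_def by (subst Teq, rule sum.union_disjoint) auto
    also have "sum sc (T \<inter> {..<k}) = sum (\<lambda>_. c) (T \<inter> {..<k})" using hc by (intro sum.cong) auto
    also have "sum sc {k..<k+\<gamma>} = 0" using hz by (intro sum.neutral) auto
    finally show ?thesis using cT by simp
  qed
  have JSeq: "{set_score sc S | S. satisfies_JR (k+\<gamma>) n A k S} = {c * real (k-\<gamma>)}"
  proof
    show "{set_score sc S | S. satisfies_JR (k+\<gamma>) n A k S} \<subseteq> {c * real (k-\<gamma>)}"
      using scoreJR by auto
    show "{c * real (k-\<gamma>)} \<subseteq> {set_score sc S | S. satisfies_JR (k+\<gamma>) n A k S}"
      using scoreJR[OF T0] T0 by (metis (mono_tags, lifting) empty_subsetI insert_subset mem_Collect_eq)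
  qed
  have J: "opt_JR_value sc (k+\<gamma>) n A k = c * real (k-\<gamma>)"
    unfolding opt_JR_value_def JSeq by simp
  define OS where "OS = {set_score sc S | S. S \<subseteq> {..<k+\<gamma>} \<and> card S = k}"
  have finOS: "finite OS"
  proof -
    have "OS \<subseteq> set_score sc ` Pow {..<k+\<gamma>}" unfolding OS_def by auto
    thus ?thesis by (rule finite_subset) auto
  qed
  have "set_score sc {..<k} \<in> OS" unfolding OS_def by auto
  moreover have "set_score sc {..<k} = c * real k" unfolding set_score_def using hc by simp
  ultimately have "c * real k \<le> opt_value sc (k+\<gamma>) k"
    unfolding opt_value_def OS_def[symmetric] using finOS by (metis Max_ge)
  moreover have "real (k - \<gamma>) = real k - real \<gamma>" using gk by (simp add: of_nat_diff)
  moreover have "real k - real \<gamma> > 0" using gk by simp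
  ultimately show ?thesis unfolding price_inst_def J using c0
    by (simp add: divide_simps mult.commute)
qed

lemma JR_T0:
  assumes "\<gamma> \<le> k" "n > 0" "k > 0" "\<forall>u<n. \<exists>h<\<gamma>. k+h \<in> A u"
  shows "satisfies_JR (k+\<gamma>) n A k ({..<k-\<gamma>} \<union> {k..<k+\<gamma>})"
  unfolding satisfies_JR_def represents_def
proof (intro conjI allI impI)
  show "{..<k - \<gamma>} \<union> {k..<k + \<gamma>} \<subseteq> {..<k + \<gamma>}" by auto
  have "card ({..<k - \<gamma>} \<union> {k..<k + \<gamma>}) = card {..<k - \<gamma>} + card {k..<k + \<gamma>}"
    by (rule card_Un_disjoint) auto
  then show "card ({..<k - \<gamma>} \<union> {k..<k + \<gamma>}) = k" using assms by simp
  fix Gr assume H: "Gr \<subseteq> {..<n} \<and> cohesive A Gr \<and> real n / real k \<le> real (card Gr)"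
  have "real n / real k > 0" using assms by simp
  then have "card Gr > 0" using H by linarith
  then obtain u where u: "u \<in> Gr" by (metis card.empty equals0I less_irrefl)
  then have "u < n" using H by auto
  then obtain h where "h < \<gamma>" "k + h \<in> A u" using assms by auto
  then have "k + h \<in> A u \<inter> ({..<k - \<gamma>} \<union> {k..<k + \<gamma>})" by auto
  then show "\<exists>u\<in>Gr. A u \<inter> ({..<k - \<gamma>} \<union> {k..<k + \<gamma>}) \<noteq> {}" using u by blast
qed

lemma JR_Z:
  assumes "\<forall>h<\<gamma>. \<exists>Gr. Gr \<subseteq> {..<n} \<and> cohesive A Gr \<and> real n / real k \<le> real (card Gr) \<and> (\<forall>u\<in>Gr. A u = {k+h})"
  shows "\<forall>T. satisfies_JR (k+\<gamma>) n A k T \<longrightarrow> {k..<k+\<gamma>} \<subseteq> T"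
proof (intro allI impI subsetI)
  fix T x assume JR: "satisfies_JR (k+\<gamma>) n A k T" and x: "x \<in> {k..<k+\<gamma>}"
  then obtain Gr where Gr: "Gr \<subseteq> {..<n}" "cohesive A Gr" "real n / real k \<le> real (card Gr)"
    "\<forall>u\<in>Gr. A u = {k+(x-k)}" using assms by (metis atLeastLessThan_iff less_diff_conv2 add.commute)
  then obtain u where "u \<in> Gr" "A u \<inter> T \<noteq> {}" using JR unfolding satisfies_JR_def represents_def by blast
  then show "x \<in> T" using Gr x by auto
qed

lemma simple_grouped:
  assumes "\<gamma> \<le> k"
  shows "grouped_instance \<gamma> k (k+\<gamma>) \<gamma> (\<lambda>u. {k+u}) (\<lambda>g. {g})"
  unfolding grouped_instance_def cohesive_def by auto

lemma pk_upper:
  assumes k1: "k > 1" and g1: "1 \<le> \<gamma>" and gk: "\<gamma> < k" and sr: "scoring_rule f"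
  shows "price_k \<gamma> k f \<le> real k / (real k - real \<gamma>)"
  unfolding price_k_def
proof (rule cSup_least)
  show "{price_inst (f m n A G) m n A k |m n A G. grouped_instance \<gamma> k m n A G} \<noteq> {}"
    using simple_grouped[of \<gamma> k] gk by auto
next
  fix x assume "x \<in> {price_inst (f m n A G) m n A k |m n A G. grouped_instance \<gamma> k m n A G}"
  then obtain m n A G where "grouped_instance \<gamma> k m n A G" "x = price_inst (f m n A G) m n A k" by auto
  then show "x \<le> real k / (real k - real \<gamma>)" using main_upper[OF k1 g1 gk] sr
    unfolding scoring_rule_def by auto
qed

lemma pk_lower:
  assumes k1: "k > 1" and g1: "1 \<le> \<gamma>" and gk: "\<gamma> < k" and sr: "scoring_rule f"
    and gi: "grouped_instance \<gamma> k m n A G"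
    and le: "real k / (real k - real \<gamma>) \<le> price_inst (f m n A G) m n A k"
  shows "real k / (real k - real \<gamma>) \<le> price_k \<gamma> k f"
  unfolding price_k_def
proof (rule order_trans[OF le], rule cSup_upper)
  show "price_inst (f m n A G) m n A k \<in> {price_inst (f m n A G) m n A k |m n A G. grouped_instance \<gamma> k m n A G}"
    using gi by auto
  show "bdd_above {price_inst (f m n A G) m n A k |m n A G. grouped_instance \<gamma> k m n A G}"
    unfolding bdd_above_def using main_upper[OF k1 g1 gk] sr unfolding scoring_rule_def
    by (intro exI[of _ "real k / (real k - real \<gamma>)"]) auto
qed

lemma simple_price:
  assumes k1: "k > 1" and g1: "1 \<le> \<gamma>" and gk: "\<gamma> < k"
  shows "real k / (real k - real \<gamma>) \<le> price_inst (\<lambda>i. if i < k then 1 else 0) (k+\<gamma>) \<gamma> (\<lambda>u. {k+u}) k"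
proof (rule price_lower[where c=1])
  show "\<forall>T. satisfies_JR (k + \<gamma>) \<gamma> (\<lambda>u. {k + u}) k T \<longrightarrow> {k..<k + \<gamma>} \<subseteq> T"
  proof (rule JR_Z, intro allI impI)
    fix h assume h: "h < \<gamma>"
    have "real \<gamma> / real k \<le> 1" using gk by simp
    then show "\<exists>Gr\<subseteq>{..<\<gamma>}. cohesive (\<lambda>u. {k + u}) Gr \<and> real \<gamma> / real k \<le> real (card Gr) \<and>
              (\<forall>u\<in>Gr. {k + u} = {k + h})"
      using h by (intro exI[of _ "{h}"]) (auto simp: cohesive_def)
  qed
  show "satisfies_JR (k + \<gamma>) \<gamma> (\<lambda>u. {k + u}) k ({..<k - \<gamma>} \<union> {k..<k + \<gamma>})"
    using gk g1 by (intro JR_T0) auto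
qed (use gk in auto)

lemma dm:
  assumes "(k::nat) > 0" "h*k \<le> u" "u < h*k+k"
  shows "u div k = h \<and> u mod k = u - h*k"
proof -
  have u: "u = (u - h*k) + h*k" "u - h*k < k" using assms by auto
  have "u div k = h" using u assms by (metis div_mult_self3 add.commute div_less add_0 mult.commute not_gr0)
  moreover have "u mod k = u - h*k" using u by (metis mod_mult_self1 mod_less)
  ultimately show ?thesis by simp
qed

definition A2 :: "nat \<Rightarrow> nat \<Rightarrow> nat \<Rightarrow> nat set" where
  "A2 \<gamma> k u = (if u mod k < \<gamma> then {k + u div k} else insert (k + u div k) {..<k})"

definition G2 :: "nat \<Rightarrow> nat \<Rightarrow> nat set" where
  "G2 k g = {g*k..<g*k+k}"

lemma memG2:
  assumes "(k::nat) > 0"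
  shows "u \<in> G2 k g \<longleftrightarrow> u div k = g"
proof
  assume "u \<in> G2 k g" then show "u div k = g" using dm[OF assms] unfolding G2_def by auto
next
  assume H: "u div k = g"
  have "g*k \<le> u" using H by (metis div_times_less_eq_dividend)
  moreover have "u < g*k + k" using H assms
    by (metis add.commute div_mult_mod_eq mod_less_divisor nat_add_left_cancel_less)
  ultimately show "u \<in> G2 k g" unfolding G2_def by auto
qed

lemma A2_own: "k + u div k \<in> A2 \<gamma> k u" unfolding A2_def by auto

lemma DA_grouped:
  assumes k1: "k > 1" and g1: "1 \<le> \<gamma>" and gk: "\<gamma> < k"
  shows "grouped_instance \<gamma> k (k+\<gamma>) (\<gamma>*k) (A2 \<gamma> k) (G2 k)"
  unfolding grouped_instance_def
proof (intro conjI allI impI)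
  have k0: "k > 0" using k1 by simp
  show "k \<le> k + \<gamma>" by simp
  fix u assume "u < \<gamma>*k"
  then have "u div k < \<gamma>" using k0 by (simp add: less_mult_imp_div_less)
  then show "A2 \<gamma> k u \<subseteq> {..<k+\<gamma>}" unfolding A2_def by auto
next
  have k0: "k > 0" using k1 by simp
  fix g assume "g < \<gamma>"
  show "G2 k g \<noteq> {}" using k0 unfolding G2_def by auto
  have "k + g \<in> (\<Inter>u\<in>G2 k g. A2 \<gamma> k u)" using memG2[OF k0] A2_own by auto
  then show "cohesive (A2 \<gamma> k) (G2 k g)" unfolding cohesive_def by auto
next
  have k0: "k > 0" using k1 by simp
  fix g h assume "g < \<gamma>" "h < \<gamma>" "g \<noteq> h"
  then show "G2 k g \<inter> G2 k h = {}" using memG2[OF k0] by auto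
next
  have k0: "k > 0" using k1 by simp
  show "(\<Union>g<\<gamma>. G2 k g) = {..<\<gamma>*k}"
  proof (intro set_eqI iffI)
    fix u assume "u \<in> (\<Union>g<\<gamma>. G2 k g)"
    then obtain g where "g < \<gamma>" "u div k = g" using memG2[OF k0] by auto
    then show "u \<in> {..<\<gamma>*k}" using div_less_iff_less_mult[OF k0] by auto
  next
    fix u assume "u \<in> {..<\<gamma>*k}"
    then have "u div k < \<gamma>" using k0 by (simp add: less_mult_imp_div_less)
    then show "u \<in> (\<Union>g<\<gamma>. G2 k g)" using memG2[OF k0] by auto
  qed
qed

lemma DA_high:
  assumes k1: "k > 1" and g1: "1 \<le> \<gamma>" and gk: "\<gamma> < k" and i: "i < k"
  shows "f_DA \<gamma> (k+\<gamma>) (\<gamma>*k) (A2 \<gamma> k) (G2 k) i = (real k - real \<gamma>) / real k"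
proof -
  have k0: "k > 0" using k1 by simp
  have hterm: "real (card {u\<in>G2 k g. i \<in> A2 \<gamma> k u}) / real (card (G2 k g)) = (real k - real \<gamma>) / real k"
    if g: "g < \<gamma>" for g
  proof -
    have "{u\<in>G2 k g. i \<in> A2 \<gamma> k u} = {g*k+\<gamma>..<g*k+k}"
    proof (intro set_eqI iffI)
      fix u assume "u \<in> {u\<in>G2 k g. i \<in> A2 \<gamma> k u}"
      then have u: "g*k \<le> u" "u < g*k+k" "i \<in> A2 \<gamma> k u" unfolding G2_def by auto
      then have "\<not> u mod k < \<gamma>" using i unfolding A2_def by (auto split: if_splits)
      then show "u \<in> {g*k+\<gamma>..<g*k+k}" using dm[OF k0 u(1,2)] u by auto
    next
      fix u assume u: "u \<in> {g*k+\<gamma>..<g*k+k}"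
      then have "g*k \<le> u" "u < g*k+k" by auto
      then have "u mod k = u - g*k" using dm[OF k0] by blast
      then have "\<not> u mod k < \<gamma>" using u by auto
      then show "u \<in> {u\<in>G2 k g. i \<in> A2 \<gamma> k u}" using u i unfolding A2_def G2_def by auto
    qed
    then have "card {u\<in>G2 k g. i \<in> A2 \<gamma> k u} = k - \<gamma>" by simp
    moreover have "card (G2 k g) = k" unfolding G2_def by simp
    ultimately show ?thesis using gk by (simp add: of_nat_diff)
  qed
  have "(\<lambda>g. real (card {u\<in>G2 k g. i \<in> A2 \<gamma> k u}) / real (card (G2 k g))) ` {..<\<gamma>}
        = {(real k - real \<gamma>) / real k}"
  proof (intro set_eqI iffI)
    fix x assume "x \<in> (\<lambda>g. real (card {u\<in>G2 k g. i \<in> A2 \<gamma> k u}) / real (card (G2 k g))) ` {..<\<gamma>}"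
    then show "x \<in> {(real k - real \<gamma>) / real k}" using hterm by auto
  next
    fix x assume "x \<in> {(real k - real \<gamma>) / real k}"
    then have "x = (\<lambda>g. real (card {u\<in>G2 k g. i \<in> A2 \<gamma> k u}) / real (card (G2 k g))) 0"
      using hterm[of 0] g1 by simp
    then show "x \<in> (\<lambda>g. real (card {u\<in>G2 k g. i \<in> A2 \<gamma> k u}) / real (card (G2 k g))) ` {..<\<gamma>}"
      using g1 by auto
  qed
  then show ?thesis unfolding f_DA_def by simp
qed

lemma DA_low:
  assumes k1: "k > 1" and g2: "2 \<le> \<gamma>" and gk: "\<gamma> < k" and h: "h < \<gamma>"
  shows "f_DA \<gamma> (k+\<gamma>) (\<gamma>*k) (A2 \<gamma> k) (G2 k) (k+h) = 0"
proof -
  have k0: "k > 0" using k1 by simp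
  define F where "F = (\<lambda>g. real (card {u\<in>G2 k g. k+h \<in> A2 \<gamma> k u}) / real (card (G2 k g)))"
  define g where "g = (if h = 0 then 1 else (0::nat))"
  have g: "g < \<gamma>" "g \<noteq> h" using g2 h unfolding g_def by auto
  have E: "{u\<in>G2 k g. k+h \<in> A2 \<gamma> k u} = {}"
  proof (intro equals0I)
    fix u assume "u \<in> {u\<in>G2 k g. k+h \<in> A2 \<gamma> k u}"
    then have "u div k = g" "k + h \<in> A2 \<gamma> k u" using memG2[OF k0] by auto
    then show False using g unfolding A2_def by (auto split: if_splits)
  qed
  have "F g = 0" unfolding F_def E by simp
  then have "Min (F ` {..<\<gamma>}) \<le> 0" using g by (metis Min_le finite_imageI finite_lessThan imageI lessThan_iff)
  moreover have "Min (F ` {..<\<gamma>}) \<in> F ` {..<\<gamma>}" using g by (intro Min_in) auto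
  moreover have "\<forall>x\<in>F ` {..<\<gamma>}. x \<ge> 0" unfolding F_def by auto
  ultimately have "Min (F ` {..<\<gamma>}) = 0" by (meson order_antisym)
  then show ?thesis unfolding f_DA_def F_def by simp
qed

lemma DA_nonneg: "scoring_rule (f_DA \<gamma>)" if "\<gamma> \<ge> 1"
  unfolding scoring_rule_def f_DA_def
proof (intro allI)
  fix m n :: nat and A G :: "nat \<Rightarrow> nat set" and i :: nat
  let ?F = "(\<lambda>g. real (card {u\<in>G g. i \<in> A u}) / real (card (G g)))"
  have "0 \<in> {..<\<gamma>}" using that by auto
  then have "{..<\<gamma>} \<noteq> {}" by blast
  then have "Min (?F ` {..<\<gamma>}) \<in> ?F ` {..<\<gamma>}" by (intro Min_in) auto
  then show "0 \<le> Min (?F ` {..<\<gamma>})" by auto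
qed

lemma DA_price:
  assumes k1: "k > 1" and g2: "2 \<le> \<gamma>" and gk: "\<gamma> < k"
  shows "real k / (real k - real \<gamma>) \<le> price_inst (f_DA \<gamma> (k+\<gamma>) (\<gamma>*k) (A2 \<gamma> k) (G2 k)) (k+\<gamma>) (\<gamma>*k) (A2 \<gamma> k) k"
proof (rule price_lower[where c="(real k - real \<gamma>) / real k"])
  have k0: "k > 0" using k1 by simp
  show "\<forall>i<k. f_DA \<gamma> (k + \<gamma>) (\<gamma> * k) (A2 \<gamma> k) (G2 k) i = (real k - real \<gamma>) / real k"
    using DA_high[OF k1 _ gk] g2 by auto
  show "\<forall>i. k \<le> i \<and> i < k + \<gamma> \<longrightarrow> f_DA \<gamma> (k + \<gamma>) (\<gamma> * k) (A2 \<gamma> k) (G2 k) i = 0"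
    using DA_low[OF k1 g2 gk] by (metis add_diff_inverse_nat add_less_cancel_left not_le)
  show "0 < (real k - real \<gamma>) / real k" using gk by simp
  show "\<forall>T. satisfies_JR (k + \<gamma>) (\<gamma>*k) (A2 \<gamma> k) k T \<longrightarrow> {k..<k + \<gamma>} \<subseteq> T"
  proof (rule JR_Z, intro allI impI)
    fix h assume h: "h < \<gamma>"
    define Gr where "Gr = {h*k..<h*k+\<gamma>}"
    have A: "\<forall>u\<in>Gr. A2 \<gamma> k u = {k+h}"
    proof
      fix u assume "u \<in> Gr"
      then have u: "h*k \<le> u" "u < h*k+k" "u < h*k+\<gamma>" using gk unfolding Gr_def by auto
      then show "A2 \<gamma> k u = {k+h}" using dm[OF k0 u(1,2)] unfolding A2_def by auto
    qed
    have "Gr \<subseteq> {..<\<gamma>*k}"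
    proof
      fix u assume "u \<in> Gr"
      then have "u < h*k+k" using gk unfolding Gr_def by auto
      also have "h*k + k = (h+1)*k" by simp
      also have "\<dots> \<le> \<gamma>*k" using h by (intro mult_right_mono) auto
      finally show "u \<in> {..<\<gamma>*k}" by simp
    qed
    moreover have "cohesive (A2 \<gamma> k) Gr"
    proof -
      have "h*k \<in> Gr" using g2 unfolding Gr_def by auto
      then have "(\<Inter>u\<in>Gr. A2 \<gamma> k u) = {k+h}" using A by auto
      then show ?thesis unfolding cohesive_def by auto
    qed
    moreover have "real (\<gamma>*k) / real k \<le> real (card Gr)" unfolding Gr_def using k0 by simp
    ultimately show "\<exists>Gr\<subseteq>{..<\<gamma>*k}. cohesive (A2 \<gamma> k) Gr \<and> real (\<gamma>*k) / real k \<le> real (card Gr) \<and>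
              (\<forall>u\<in>Gr. A2 \<gamma> k u = {k + h})" using A by blast
  qed
  show "satisfies_JR (k + \<gamma>) (\<gamma>*k) (A2 \<gamma> k) k ({..<k - \<gamma>} \<union> {k..<k + \<gamma>})"
  proof (rule JR_T0)
    show "\<gamma> \<le> k" "0 < \<gamma>*k" "0 < k" using gk g2 k0 by auto
    show "\<forall>u<\<gamma>*k. \<exists>h<\<gamma>. k + h \<in> A2 \<gamma> k u"
      using A2_own k0 by (metis less_mult_imp_div_less)
  qed
qed (use gk in auto)

theorem theorem2:
  fixes k gamma :: nat
  assumes "k > 1" and "1 \<le> gamma" and "gamma < k"
  shows "(\<forall>f. scoring_rule f \<longrightarrow>
            (\<forall>m n A G. grouped_instance gamma k m n A G \<longrightarrow>
                price_inst (f m n A G) m n A k \<le> real k / (real k - real gamma))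
            \<and> price_k gamma k f \<le> real k / (real k - real gamma))
       \<and> (\<exists>f. scoring_rule f \<and> price_k gamma k f = real k / (real k - real gamma))
       \<and> (gamma \<ge> 2 \<longrightarrow> price_k gamma k (f_DA gamma) = real k / (real k - real gamma))"
proof (intro conjI allI impI)
  fix f assume sr: "scoring_rule f"
  fix m n A G assume "grouped_instance gamma k m n A G"
  then show "price_inst (f m n A G) m n A k \<le> real k / (real k - real gamma)"
    using main_upper[OF assms] sr unfolding scoring_rule_def by auto
next
  fix f assume sr: "scoring_rule f"
  show "price_k gamma k f \<le> real k / (real k - real gamma)" using pk_upper[OF assms sr] .
next
  define f :: scoring_rule where "f = (\<lambda>m n A G i. if i < k then 1 else 0)"
  have sr: "scoring_rule f" unfolding scoring_rule_def f_def by auto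
  have "real k / (real k - real gamma) \<le> price_k gamma k f"
    using pk_lower[OF assms sr simple_grouped[of gamma k]] simple_price[OF assms] assms
    unfolding f_def by auto
  then show "\<exists>f. scoring_rule f \<and> price_k gamma k f = real k / (real k - real gamma)"
    using pk_upper[OF assms sr] sr by (intro exI[of _ f]) auto
next
  assume g2: "gamma \<ge> 2"
  have sr: "scoring_rule (f_DA gamma)" using DA_nonneg assms by auto
  have "real k / (real k - real gamma) \<le> price_k gamma k (f_DA gamma)"
    using pk_lower[OF assms sr DA_grouped[OF assms]] DA_price[OF assms(1) g2 assms(3)] by auto
  then show "price_k gamma k (f_DA gamma) = real k / (real k - real gamma)"
    using pk_upper[OF assms sr] by auto
qed

end
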